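(* Let $k$ be a positive integer, let $K=2^{3k+5}$, and let $G$ be a $K$-almost-regular graph on $n$ vertices with average degree $d(G)=Cn^{1/k}$ for some $C>0$. Then at most $\frac{2^{2k+10}}{\sqrt{C}}\hom(C_{2k},G)$ homomorphic $2k$-cycles in $G$ are degenerate.
   Context: A graph is $K$-almost-regular if its maximum degree is at most $K$ times its minimum degree. A homomorphic $2k$-cycle in $G$ is a sequence $(v_1,\dots,v_{2k})$ of vertices of $G$ such that $v_i$ is adjacent to $v_{i+1}$ for $i=1,\dots,2k-1$ and $v_{2k}$ is adjacent to $v_1$; it is non-degenerate if the $2k$ vertices are distinct and degenerate otherwise. $\hom(C_{2k},G)$ is the number of homomorphic $2k$-cycles in $G$. *)

theory Defs
  imports "HOL-Analysis.Analysis"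
begin

definition simple_graph :: "'a set \<Rightarrow> ('a \<Rightarrow> 'a \<Rightarrow> bool) \<Rightarrow> bool" where
  "simple_graph V E \<longleftrightarrow> finite V \<and> (\<forall>u v. E u v \<longrightarrow> u \<in> V \<and> v \<in> V)
     \<and> (\<forall>u v. E u v \<longrightarrow> E v u) \<and> (\<forall>v. \<not> E v v)"

definition degree :: "'a set \<Rightarrow> ('a \<Rightarrow> 'a \<Rightarrow> bool) \<Rightarrow> 'a \<Rightarrow> nat" where
  "degree V E v = card {u \<in> V. E v u}"

definition max_degree :: "'a set \<Rightarrow> ('a \<Rightarrow> 'a \<Rightarrow> bool) \<Rightarrow> nat" where
  "max_degree V E = Max (degree V E ` V)"

definition min_degree :: "'a set \<Rightarrow> ('a \<Rightarrow> 'a \<Rightarrow> bool) \<Rightarrow> nat" where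
  "min_degree V E = Min (degree V E ` V)"

definition average_degree :: "'a set \<Rightarrow> ('a \<Rightarrow> 'a \<Rightarrow> bool) \<Rightarrow> real" where
  "average_degree V E = (\<Sum>v\<in>V. real (degree V E v)) / real (card V)"

definition almost_regular :: "real \<Rightarrow> 'a set \<Rightarrow> ('a \<Rightarrow> 'a \<Rightarrow> bool) \<Rightarrow> bool" where
  "almost_regular K V E \<longleftrightarrow> real (max_degree V E) \<le> K * real (min_degree V E)"

text \<open>Homomorphic cycles of length m, as sequences indexed by 0..m-1
(i.e. v_1..v_m shifted), extended by undefined outside the index range.\<close>

definition hom_cycles :: "nat \<Rightarrow> 'a set \<Rightarrow> ('a \<Rightarrow> 'a \<Rightarrow> bool) \<Rightarrow> (nat \<Rightarrow> 'a) set" where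
  "hom_cycles m V E = {f \<in> {0..<m} \<rightarrow>\<^sub>E V. \<forall>i<m. E (f i) (f ((i + 1) mod m))}"

definition degenerate_hom_cycles :: "nat \<Rightarrow> 'a set \<Rightarrow> ('a \<Rightarrow> 'a \<Rightarrow> bool) \<Rightarrow> (nat \<Rightarrow> 'a) set" where
  "degenerate_hom_cycles m V E = {f \<in> hom_cycles m V E. \<not> inj_on f {0..<m}}"

definition hom_count :: "nat \<Rightarrow> 'a set \<Rightarrow> ('a \<Rightarrow> 'a \<Rightarrow> bool) \<Rightarrow> nat" where
  "hom_count m V E = card (hom_cycles m V E)"

end

theory Submission
  imports Defs
begin

definition Wall :: "'a set \<Rightarrow> ('a \<Rightarrow> 'a \<Rightarrow> bool) \<Rightarrow> nat \<Rightarrow> (nat \<Rightarrow> 'a) set" where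
  "Wall V E m = {g \<in> {0..m} \<rightarrow>\<^sub>E V. \<forall>i<m. E (g i) (g (Suc i))}"

lemma Wall_in: "g \<in> Wall V E m \<Longrightarrow> t \<le> m \<Longrightarrow> g t \<in> V"
  unfolding Wall_def by auto
lemma Wall_out: "g \<in> Wall V E m \<Longrightarrow> \<not> t \<le> m \<Longrightarrow> g t = undefined"
  unfolding Wall_def by (simp add: PiE_def extensional_def)
lemma Wall_edge: "g \<in> Wall V E m \<Longrightarrow> i < m \<Longrightarrow> E (g i) (g (Suc i))"
  unfolding Wall_def by auto
lemma WallI: "(\<And>t. t \<le> m \<Longrightarrow> g t \<in> V) \<Longrightarrow> (\<And>t. \<not> t \<le> m \<Longrightarrow> g t = undefined)
   \<Longrightarrow> (\<And>i. i < m \<Longrightarrow> E (g i) (g (Suc i))) \<Longrightarrow> g \<in> Wall V E m"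
  unfolding Wall_def by (simp add: PiE_def extensional_def Pi_def)

definition cat :: "nat \<Rightarrow> nat \<Rightarrow> (nat \<Rightarrow> 'a) \<Rightarrow> (nat \<Rightarrow> 'a) \<Rightarrow> nat \<Rightarrow> 'a" where
  "cat p m h1 h2 = (\<lambda>t. if t \<le> p then h1 t else if t \<le> m then h2 (t-p) else undefined)"

lemma split_bij:
  assumes "p \<le> m"
  shows "bij_betw (\<lambda>g. (restrict g {0..p}, restrict (\<lambda>t. g (t+p)) {0..m-p}))
    {g \<in> Wall V E m. P (restrict g {0..p}) \<and> g p = x \<and> Q (restrict (\<lambda>t. g (t+p)) {0..m-p})}
    ({h\<in>Wall V E p. P h \<and> h p = x} \<times> {h \<in> Wall V E (m-p). h 0 = x \<and> Q h})"
proof (rule bij_betw_byWitness[where f'="\<lambda>(h1,h2). cat p m h1 h2"])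
  have A: "cat p m (restrict g {0..p}) (restrict (\<lambda>t. g (t+p)) {0..m-p}) = g" if g: "g \<in> Wall V E m" for g
  proof
    fix t show "cat p m (restrict g {0..p}) (restrict (\<lambda>t. g (t+p)) {0..m-p}) t = g t"
      using Wall_out[OF g, of t] assms unfolding cat_def by auto
  qed
  show "\<forall>g\<in>{g \<in> Wall V E m. P (restrict g {0..p}) \<and> g p = x \<and> Q (restrict (\<lambda>t. g (t+p)) {0..m-p})}.
     (case (restrict g {0..p}, restrict (\<lambda>t. g (t+p)) {0..m-p}) of (h1,h2) \<Rightarrow> cat p m h1 h2) = g"
    using A by simp
  have B1: "restrict (cat p m h1 h2) {0..p} = h1" if "h1 \<in> Wall V E p" for h1 h2
  proof
    fix t show "restrict (cat p m h1 h2) {0..p} t = h1 t"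
      using Wall_out[OF that, of t] unfolding cat_def by auto
  qed
  have B2: "restrict (\<lambda>t. cat p m h1 h2 (t+p)) {0..m-p} = h2" if "h2 \<in> Wall V E (m-p)" "h1 p = h2 0" for h1 h2
  proof
    fix t show "restrict (\<lambda>t. cat p m h1 h2 (t+p)) {0..m-p} t = h2 t"
      using Wall_out[OF that(1), of t] that(2) assms unfolding cat_def by (cases "t = 0") auto
  qed
  show "\<forall>a'\<in>{h\<in>Wall V E p. P h \<and> h p = x} \<times> {h \<in> Wall V E (m-p). h 0 = x \<and> Q h}.
    (\<lambda>g. (restrict g {0..p}, restrict (\<lambda>t. g (t+p)) {0..m-p})) ((\<lambda>(h1,h2). cat p m h1 h2) a') = a'"
    using B1 B2 by auto
  show "(\<lambda>g. (restrict g {0..p}, restrict (\<lambda>t. g (t+p)) {0..m-p})) ` 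
    {g \<in> Wall V E m. P (restrict g {0..p}) \<and> g p = x \<and> Q (restrict (\<lambda>t. g (t+p)) {0..m-p})}
    \<subseteq> {h\<in>Wall V E p. P h \<and> h p = x} \<times> {h \<in> Wall V E (m-p). h 0 = x \<and> Q h}"
  proof (rule image_subsetI)
    fix g assume "g \<in> {g \<in> Wall V E m. P (restrict g {0..p}) \<and> g p = x \<and> Q (restrict (\<lambda>t. g (t+p)) {0..m-p})}"
    then have g: "g \<in> Wall V E m" "P (restrict g {0..p})" "g p = x" "Q (restrict (\<lambda>t. g (t+p)) {0..m-p})"
      by auto
    have "restrict g {0..p} \<in> Wall V E p"
      by (rule WallI) (use Wall_in[OF g(1)] Wall_edge[OF g(1)] assms in auto)
    moreover have "restrict (\<lambda>t. g (t+p)) {0..m-p} \<in> Wall V E (m-p)"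
    proof (rule WallI)
      fix i assume "i < m - p"
      then show "E (restrict (\<lambda>t. g (t+p)) {0..m-p} i) (restrict (\<lambda>t. g (t+p)) {0..m-p} (Suc i))"
        using Wall_edge[OF g(1), of "i+p"] by auto
    qed (use Wall_in[OF g(1)] assms in auto)
    ultimately show "(restrict g {0..p}, restrict (\<lambda>t. g (t+p)) {0..m-p}) \<in> {h\<in>Wall V E p. P h \<and> h p = x} \<times> {h \<in> Wall V E (m-p). h 0 = x \<and> Q h}"
      using g by auto
  qed
  show "(\<lambda>(h1,h2). cat p m h1 h2) `
     ({h\<in>Wall V E p. P h \<and> h p = x} \<times> {h \<in> Wall V E (m-p). h 0 = x \<and> Q h})
    \<subseteq> {g \<in> Wall V E m. P (restrict g {0..p}) \<and> g p = x \<and> Q (restrict (\<lambda>t. g (t+p)) {0..m-p})}"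
  proof (rule image_subsetI)
    fix hh assume hh: "hh \<in> {h\<in>Wall V E p. P h \<and> h p = x} \<times> {h \<in> Wall V E (m-p). h 0 = x \<and> Q h}"
    obtain h1 h2 where hh_eq: "hh = (h1, h2)" by (cases hh)
    have h1: "h1 \<in> Wall V E p" "P h1" "h1 p = x" and h2: "h2 \<in> Wall V E (m-p)" "h2 0 = x" "Q h2"
      using hh hh_eq by auto
    have gi: "cat p m h1 h2 i = h2 (i - p)" if "p \<le> i" "i \<le> m" for i
      using that h1 h2 by (cases "i = p") (auto simp: cat_def)
    have "cat p m h1 h2 \<in> Wall V E m"
    proof (rule WallI)
      fix t assume "t \<le> m" then show "cat p m h1 h2 t \<in> V"
        using Wall_in[OF h1(1), of t] Wall_in[OF h2(1), of "t-p"] by (auto simp: cat_def)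
    next
      fix t assume "\<not> t \<le> m" then show "cat p m h1 h2 t = undefined" using assms by (auto simp: cat_def)
    next
      fix i assume i: "i < m"
      show "E (cat p m h1 h2 i) (cat p m h1 h2 (Suc i))"
      proof (cases "i < p")
        case True then show ?thesis using Wall_edge[OF h1(1) True] by (auto simp: cat_def)
      next
        case False
        then have "E (h2 (i-p)) (h2 (Suc (i-p)))" using Wall_edge[OF h2(1)] i by auto
        moreover have "Suc (i-p) = Suc i - p" using False by auto
        ultimately show ?thesis using gi[of i] gi[of "Suc i"] False i by auto
      qed
    qed
    then show "(\<lambda>(h1,h2). cat p m h1 h2) hh \<in> {g \<in> Wall V E m. P (restrict g {0..p}) \<and> g p = x \<and> Q (restrict (\<lambda>t. g (t+p)) {0..m-p})}"
      using B1[OF h1(1)] B2[OF h2(1)] h1 h2 hh_eq by (auto simp: cat_def)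
  qed
qed

lemma finite_Wall: "finite V \<Longrightarrow> finite (Wall V E m)"
  by (rule finite_subset[of _ "{0..m} \<rightarrow>\<^sub>E V"]) (auto simp: Wall_def intro: finite_PiE)

lemma split_card:
  assumes "p \<le> m"
  shows "card {g \<in> Wall V E m. P (restrict g {0..p}) \<and> g p = x \<and> Q (restrict (\<lambda>t. g (t+p)) {0..m-p})}
    = card {h\<in>Wall V E p. P h \<and> h p = x} * card {h \<in> Wall V E (m-p). h 0 = x \<and> Q h}"
  using bij_betw_same_card[OF split_bij[OF assms, of V E P x Q]] by (simp add: card_cartesian_product)

lemma card_group:
  assumes "finite S" "finite T" "\<And>g. g \<in> S \<Longrightarrow> h g \<in> T"
  shows "real (card S) = (\<Sum>x\<in>T. real (card {g\<in>S. h g = x}))"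
proof -
  have "(\<Sum>x\<in>T. \<Sum>g\<in>{g\<in>S. h g = x}. (1::real)) = (\<Sum>g\<in>S. 1)"
    by (rule sum.group) (use assms in auto)
  then show ?thesis by simp
qed

definition walks :: "'a set \<Rightarrow> ('a \<Rightarrow> 'a \<Rightarrow> bool) \<Rightarrow> nat \<Rightarrow> 'a \<Rightarrow> 'a \<Rightarrow> (nat \<Rightarrow> 'a) set" where
  "walks V E m u v = {g \<in> Wall V E m. g 0 = u \<and> g m = v}"

definition wk :: "'a set \<Rightarrow> ('a \<Rightarrow> 'a \<Rightarrow> bool) \<Rightarrow> nat \<Rightarrow> 'a \<Rightarrow> 'a \<Rightarrow> real" where
  "wk V E m u v = real (card (walks V E m u v))"

lemma split1:
  fixes V :: "'a set"
  assumes "p \<le> m"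
  shows "card {g \<in> Wall V E m. g 0 = u \<and> g p = x \<and> g m = v} = card (walks V E p u x) * card (walks V E (m-p) x v)"
proof -
  have "{g \<in> Wall V E m. g 0 = u \<and> g p = x \<and> g m = v} =
    {g \<in> Wall V E m. (\<lambda>h. h 0 = u) (restrict g {0..p}) \<and> g p = x \<and> (\<lambda>h. h (m-p) = v) (restrict (\<lambda>t. g (t+p)) {0..m-p})}"
  proof (rule Collect_cong)
    fix g :: "nat \<Rightarrow> 'a"
    have "restrict g {0..p} 0 = g 0" by simp
    moreover have "restrict (\<lambda>t. g (t+p)) {0..m-p} (m-p) = g m" using assms by simp
    ultimately show "(g \<in> Wall V E m \<and> g 0 = u \<and> g p = x \<and> g m = v) =
      (g \<in> Wall V E m \<and> (\<lambda>h. h 0 = u) (restrict g {0..p}) \<and> g p = x \<and> (\<lambda>h. h (m-p) = v) (restrict (\<lambda>t. g (t+p)) {0..m-p}))"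
      by metis
  qed
  moreover have "card {g \<in> Wall V E m. (\<lambda>h. h 0 = u) (restrict g {0..p}) \<and> g p = x \<and> (\<lambda>h. h (m-p) = v) (restrict (\<lambda>t. g (t+p)) {0..m-p})}
     = card {h\<in>Wall V E p. h 0 = u \<and> h p = x} * card {h \<in> Wall V E (m-p). h 0 = x \<and> h (m-p) = v}"
    using split_card[OF assms, where V=V and E=E and P="\<lambda>h. h 0 = u" and x=x and Q="\<lambda>h. h (m-p) = v"] by assumption
  ultimately show ?thesis unfolding walks_def by (simp only:)
qed

lemma split2:
  fixes V :: "'a set"
  assumes "i \<le> j" "j \<le> m"
  shows "card {g \<in> Wall V E m. g 0 = u \<and> g i = x \<and> g j = y \<and> g m = v} =
     card (walks V E i u x) * card (walks V E (j-i) x y) * card (walks V E (m-j) y v)"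
proof -
  have im: "i \<le> m" using assms by linarith
  have "{g \<in> Wall V E m. g 0 = u \<and> g i = x \<and> g j = y \<and> g m = v} =
    {g \<in> Wall V E m. (\<lambda>h. h 0 = u) (restrict g {0..i}) \<and> g i = x \<and> (\<lambda>h. h (j-i) = y \<and> h (m-i) = v) (restrict (\<lambda>t. g (t+i)) {0..m-i})}"
  proof (rule Collect_cong)
    fix g :: "nat \<Rightarrow> 'a"
    have "restrict g {0..i} 0 = g 0" by simp
    moreover have "restrict (\<lambda>t. g (t+i)) {0..m-i} (m-i) = g m" using assms by simp
    moreover have "restrict (\<lambda>t. g (t+i)) {0..m-i} (j-i) = g j" using assms by (simp add: diff_le_mono)
    ultimately show "(g \<in> Wall V E m \<and> g 0 = u \<and> g i = x \<and> g j = y \<and> g m = v) =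
      (g \<in> Wall V E m \<and> (\<lambda>h. h 0 = u) (restrict g {0..i}) \<and> g i = x \<and> (\<lambda>h. h (j-i) = y \<and> h (m-i) = v) (restrict (\<lambda>t. g (t+i)) {0..m-i}))"
      by metis
  qed
  moreover have "card {g \<in> Wall V E m. (\<lambda>h. h 0 = u) (restrict g {0..i}) \<and> g i = x \<and> (\<lambda>h. h (j-i) = y \<and> h (m-i) = v) (restrict (\<lambda>t. g (t+i)) {0..m-i})}
     = card {h\<in>Wall V E i. h 0 = u \<and> h i = x} * card {h \<in> Wall V E (m-i). h 0 = x \<and> (h (j-i) = y \<and> h (m-i) = v)}"
    using split_card[OF im, where V=V and E=E and P="\<lambda>h. h 0 = u" and x=x and Q="\<lambda>h. h (j-i) = y \<and> h (m-i) = v"] by assumption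
  moreover have "card {h \<in> Wall V E (m-i). h 0 = x \<and> (h (j-i) = y \<and> h (m-i) = v)} = card (walks V E (j-i) x y) * card (walks V E (m-i-(j-i)) y v)"
    by (rule split1) (use assms in linarith)
  moreover have "m-i-(j-i) = m - j" using assms by simp
  ultimately show ?thesis unfolding walks_def by (simp only: mult.assoc)
qed

locale sg =
  fixes V :: "'a set" and E :: "'a \<Rightarrow> 'a \<Rightarrow> bool"
  assumes sg: "simple_graph V E"
begin

lemma finV: "finite V" using sg by (simp add: simple_graph_def)
lemma edgeV: "E u v \<Longrightarrow> u \<in> V \<and> v \<in> V" using sg by (simp add: simple_graph_def)
lemma symE: "E u v \<Longrightarrow> E v u" using sg by (simp add: simple_graph_def)
lemma irrE: "\<not> E v v" using sg by (simp add: simple_graph_def)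

lemma finite_walks: "finite (walks V E m u v)"
  unfolding walks_def using finite_Wall[OF finV] by auto

lemma wk_nonneg: "wk V E m u v \<ge> 0" by (simp add: wk_def)

lemma wk_add: "wk V E (p+q) u v = (\<Sum>w\<in>V. wk V E p u w * wk V E q w v)"
proof -
  have "real (card (walks V E (p+q) u v)) = (\<Sum>w\<in>V. real (card {g\<in>walks V E (p+q) u v. g p = w}))"
    by (rule card_group[OF finite_walks finV]) (auto simp: walks_def intro: Wall_in)
  also have "\<dots> = (\<Sum>w\<in>V. wk V E p u w * wk V E q w v)"
  proof (rule sum.cong[OF refl])
    fix w
    have "{g\<in>walks V E (p+q) u v. g p = w} = {g \<in> Wall V E (p+q). g 0 = u \<and> g p = w \<and> g (p+q) = v}"
      unfolding walks_def by blast
    then show "real (card {g\<in>walks V E (p+q) u v. g p = w}) = wk V E p u w * wk V E q w v"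
      using split1[of p "p+q" V E u w v] unfolding wk_def by simp
  qed
  finally show ?thesis by (simp add: wk_def)
qed

lemma rev_bij: "bij_betw (\<lambda>g. restrict (\<lambda>t. g (m - t)) {0..m}) (walks V E m u v) (walks V E m v u)"
proof (rule bij_betw_byWitness[where f'="\<lambda>g. restrict (\<lambda>t. g (m - t)) {0..m}"])
  have inv: "restrict (\<lambda>t. restrict (\<lambda>t. g (m - t)) {0..m} (m - t)) {0..m} = g" if "g \<in> Wall V E m" for g
  proof
    fix t show "restrict (\<lambda>t. restrict (\<lambda>t. g (m - t)) {0..m} (m - t)) {0..m} t = g t"
      using Wall_out[OF that, of t] by auto
  qed
  have into: "restrict (\<lambda>t. g (m - t)) {0..m} \<in> walks V E m b a" if "g \<in> walks V E m a b" for g a b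
  proof -
    have g: "g \<in> Wall V E m" "g 0 = a" "g m = b" using that by (auto simp: walks_def)
    have "restrict (\<lambda>t. g (m - t)) {0..m} \<in> Wall V E m"
    proof (rule WallI)
      fix i assume i: "i < m"
      have "E (g (m - Suc i)) (g (Suc (m - Suc i)))" using Wall_edge[OF g(1), of "m - Suc i"] i by auto
      moreover have "Suc (m - Suc i) = m - i" using i by auto
      ultimately show "E (restrict (\<lambda>t. g (m - t)) {0..m} i) (restrict (\<lambda>t. g (m - t)) {0..m} (Suc i))"
        using i symE by auto
    qed (use Wall_in[OF g(1)] in auto)
    then show ?thesis using g by (auto simp: walks_def)
  qed
  show "\<forall>a\<in>walks V E m u v. restrict (\<lambda>t. restrict (\<lambda>t. a (m - t)) {0..m} (m - t)) {0..m} = a"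
    using inv by (auto simp: walks_def)
  show "\<forall>a\<in>walks V E m v u. restrict (\<lambda>t. restrict (\<lambda>t. a (m - t)) {0..m} (m - t)) {0..m} = a"
    using inv by (auto simp: walks_def)
  show "(\<lambda>g. restrict (\<lambda>t. g (m - t)) {0..m}) ` walks V E m u v \<subseteq> walks V E m v u"
    using into by blast
  show "(\<lambda>g. restrict (\<lambda>t. g (m - t)) {0..m}) ` walks V E m v u \<subseteq> walks V E m u v"
    using into by blast
qed

lemma wk_sym: "wk V E m u v = wk V E m v u"
  unfolding wk_def using bij_betw_same_card[OF rev_bij] by simp

end

context sg begin

lemma walks1: "walks V E 1 u v = (if E u v then {restrict (\<lambda>t. if t = 0 then u else v) {0..1}} else {})"
proof (cases "E u v")
  case True
  have "walks V E 1 u v = {restrict (\<lambda>t. if t = 0 then u else v) {0..1}}"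
  proof
    show "walks V E 1 u v \<subseteq> {restrict (\<lambda>t. if t = 0 then u else v) {0..1}}"
    proof
      fix g assume g: "g \<in> walks V E 1 u v"
      then have gw: "g \<in> Wall V E 1" "g 0 = u" "g 1 = v" by (auto simp: walks_def)
      have "g = restrict (\<lambda>t. if t = 0 then u else v) {0..1}"
      proof
        fix t show "g t = restrict (\<lambda>t. if t = 0 then u else v) {0..1} t"
          using gw Wall_out[OF gw(1), of t] by (cases "t = 0"; cases "t = 1") auto
      qed
      then show "g \<in> {restrict (\<lambda>t. if t = 0 then u else v) {0..1}}" by simp
    qed
    have "restrict (\<lambda>t. if t = 0 then u else v) {0..1} \<in> Wall V E 1"
      by (rule WallI) (use True edgeV in auto)
    then show "{restrict (\<lambda>t. if t = 0 then u else v) {0..1}} \<subseteq> walks V E 1 u v"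
      by (auto simp: walks_def)
  qed
  then show ?thesis using True by simp
next
  case False
  have "walks V E 1 u v = {}"
  proof (rule ccontr)
    assume "walks V E 1 u v \<noteq> {}"
    then obtain g where "g \<in> walks V E 1 u v" by blast
    then have gw: "g \<in> Wall V E 1" "g 0 = u" "g 1 = v" by (auto simp: walks_def)
    then show False using Wall_edge[OF gw(1), of 0] False by simp
  qed
  then show ?thesis using False by simp
qed

lemma wk1: "wk V E 1 u v = (if E u v then 1 else 0)"
  unfolding wk_def walks1 by simp

lemma wk1_Suc: "wk V E (Suc 0) u v = (if E u v then 1 else 0)"
  using wk1 by simp

lemma walks0: "walks V E 0 u v = (if u = v \<and> u \<in> V then {restrict (\<lambda>t. u) {0..0}} else {})"
proof (cases "u = v \<and> u \<in> V")
  case True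
  have "walks V E 0 u v = {restrict (\<lambda>t. u) {0..0}}"
  proof
    show "walks V E 0 u v \<subseteq> {restrict (\<lambda>t. u) {0..0}}"
    proof
      fix g assume g: "g \<in> walks V E 0 u v"
      then have gw: "g \<in> Wall V E 0" "g 0 = u" by (auto simp: walks_def)
      have "g = restrict (\<lambda>t. u) {0..0}"
      proof
        fix t show "g t = restrict (\<lambda>t. u) {0..0} t"
          using gw Wall_out[OF gw(1), of t] by (cases "t = 0") auto
      qed
      then show "g \<in> {restrict (\<lambda>t. u) {0..0}}" by simp
    qed
    have "restrict (\<lambda>t. u) {0..0} \<in> Wall V E 0"
      by (rule WallI) (use True in auto)
    then show "{restrict (\<lambda>t. u) {0..0}} \<subseteq> walks V E 0 u v"
      using True by (auto simp: walks_def)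
  qed
  then show ?thesis using True by auto
next
  case False
  have "walks V E 0 u v = {}"
  proof (rule ccontr)
    assume "walks V E 0 u v \<noteq> {}"
    then obtain g where "g \<in> walks V E 0 u v" by blast
    then have gw: "g \<in> Wall V E 0" "g 0 = u" "g 0 = v" by (auto simp: walks_def)
    then show False using Wall_in[OF gw(1), of 0] False by simp
  qed
  then show ?thesis using False by simp
qed

lemma wk0: "wk V E 0 u v = (if u = v \<and> u \<in> V then 1 else 0)"
  unfolding wk_def walks0 by auto

lemma wk2_deg: "wk V E 2 v v = real (degree V E v)"
proof -
  have "wk V E 2 v v = wk V E (1+1) v v" by (simp only: one_add_one)
  also have "\<dots> = (\<Sum>w\<in>V. wk V E 1 v w * wk V E 1 w v)" by (rule wk_add)
  also have "\<dots> = (\<Sum>w\<in>V. if E v w then 1 else 0)"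
    by (rule sum.cong) (auto simp: wk1 wk1_Suc dest: symE)
  also have "\<dots> = real (card {w\<in>V. E v w})"
    using finV by (simp add: sum.If_cases Int_def)
  finally show ?thesis by (simp add: degree_def)
qed

lemma wk_even_pos:
  assumes "E v w"
  shows "wk V E (2*j) v v > 0"
proof -
  define g where "g = restrict (\<lambda>t. if even t then v else w) {0..2*j}"
  have "g \<in> Wall V E (2*j)"
  proof (rule WallI)
    fix i assume "i < 2*j"
    then show "E (g i) (g (Suc i))" using assms symE by (auto simp: g_def)
  qed (use assms edgeV in \<open>auto simp: g_def\<close>)
  then have "g \<in> walks V E (2*j) v v" by (auto simp: walks_def g_def)
  then have "walks V E (2*j) v v \<noteq> {}" by blast
  then show ?thesis unfolding wk_def using finite_walks card_gt_0_iff by auto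
qed

lemma wk_sq: "wk V E (2 * s) x x = (\<Sum>w\<in>V. (wk V E s x w)^2)"
  using wk_add[of s s x x] wk_sym[of s _ x] by (simp add: power2_eq_square mult_2)

lemma wk_cs: "(wk V E (s+t) x x)^2 \<le> wk V E (2 * s) x x * wk V E (2 * t) x x"
proof -
  have "wk V E (s+t) x x = (\<Sum>w\<in>V. wk V E s x w * wk V E t x w)"
    using wk_add[of s t x x] wk_sym[of t _ x] by simp
  then show ?thesis using Cauchy_Schwarz_ineq_sum[of "\<lambda>w. wk V E s x w" "\<lambda>w. wk V E t x w" V]
    by (simp add: wk_sq)
qed

end

lemma lc_shift:
  fixes f :: "nat \<Rightarrow> real"
  assumes pos: "\<And>j. f j > 0" and lc: "\<And>j. (f (Suc j))^2 \<le> f j * f (Suc (Suc j))" and ab: "a \<le> b"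
  shows "f (a+s) * f b \<le> f a * f (b+s)"
proof -
  define r where "r i = f (Suc i) / f i" for i
  have rpos: "r i > 0" for i using pos by (simp add: r_def)
  have "incseq r"
  proof (rule incseq_SucI)
    fix i
    have "f (Suc i) * f (Suc i) \<le> f i * f (Suc (Suc i))" using lc[of i] by (simp add: power2_eq_square)
    then show "r i \<le> r (Suc i)" using pos[of i] pos[of "Suc i"]
      by (simp add: r_def divide_simps mult.commute)
  qed
  then have rmono: "r i \<le> r j" if "i \<le> j" for i j using that by (simp add: incseqD)
  have "f (a+s) / f a \<le> f (b+s) / f b"
  proof (induction s)
    case 0 then show ?case using pos[of a] pos[of b] by simp
  next
    case (Suc s)
    have ea: "f (a + Suc s) / f a = (f (a+s) / f a) * r (a+s)"
      using pos[of "a+s"] by (simp add: r_def)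
    have eb: "f (b + Suc s) / f b = (f (b+s) / f b) * r (b+s)"
      using pos[of "b+s"] by (simp add: r_def)
    have "(f (a+s) / f a) * r (a+s) \<le> (f (b+s) / f b) * r (b+s)"
      by (rule mult_mono) (use Suc rmono[of "a+s" "b+s"] ab pos rpos in \<open>auto intro: less_imp_le\<close>)
    then show ?case using ea eb by (simp only: add_Suc_right)
  qed
  then show ?thesis using pos[of a] pos[of b] by (simp add: divide_simps mult.commute)
qed

context sg begin

lemma pv:
  assumes x: "x \<in> V" and xw: "E x w" and a1: "1 \<le> a" and a2: "a < 2*k"
  shows "wk V E a x x * wk V E (2*k-a) x x \<le> wk V E 2 x x * wk V E (2*k-2) x x"
proof -
  define y where "y j = wk V E (2*j) x x" for j
  have ypos: "y j > 0" for j unfolding y_def by (rule wk_even_pos[OF xw])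
  have ylc: "(y (Suc j))^2 \<le> y j * y (Suc (Suc j))" for j
  proof -
    have "2 * Suc j = j + Suc (Suc j)" by simp
    then show ?thesis using wk_cs[of j "Suc (Suc j)" x] unfolding y_def by (simp add: mult_2)
  qed
  have sh: "y (1+s) * y b \<le> y 1 * y (b+s)" if "1 \<le> b" for s b
    using lc_shift[of y, OF ypos ylc that] by simp
  have rhs: "wk V E 2 x x * wk V E (2*k-2) x x = y 1 * y (k-1)"
    unfolding y_def by (simp add: right_diff_distrib')
  have nn: "0 \<le> y 1 * y (k-1)" using ypos by (simp add: less_imp_le)
  have w1: "wk V E 1 x x = 0" using wk1[of x x] irrE by simp
  show ?thesis
  proof (cases "a = 1 \<or> a = 2*k-1")
    case True
    then have "wk V E a x x * wk V E (2*k-a) x x = 0"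
      using w1 a2 by auto
    then show ?thesis using rhs nn by linarith
  next
    case False
    then have a3: "2 \<le> a" "a \<le> 2*k-2" using a1 a2 by auto
    show ?thesis
    proof (cases "even a")
      case True
      then obtain m where m: "a = 2*m" by blast
      have m1: "1 \<le> m" "m \<le> k - 1" using a3 m by auto
      have "y (1+(m-1)) * y (k-m) \<le> y 1 * y (k-m+(m-1))" by (rule sh) (use m1 in auto)
      moreover have "1+(m-1) = m" "k-m+(m-1) = k-1" using m1 by auto
      moreover have "wk V E a x x = y m" "wk V E (2*k-a) x x = y (k-m)"
        unfolding y_def using m by (auto simp: right_diff_distrib')
      ultimately show ?thesis using rhs by simp
    next
      case False
      then obtain m where m: "a = 2*m+1" using oddE by blast
      have m1: "1 \<le> m" "m + 2 \<le> k" using a3 m by auto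
      have ca: "(wk V E a x x)^2 \<le> y m * y (m+1)"
        using wk_cs[of m "m+1" x] m unfolding y_def by (simp add: mult_2)
      have "2*k - a = (k-m-1) + (k-m)" using m m1 by auto
      then have cb: "(wk V E (2*k-a) x x)^2 \<le> y (k-m-1) * y (k-m)"
        using wk_cs[of "k-m-1" "k-m" x] unfolding y_def by simp
      have s1: "y (1+(m-1)) * y (k-m) \<le> y 1 * y (k-m+(m-1))" by (rule sh) (use m1 in auto)
      have s2: "y (1+m) * y (k-m-1) \<le> y 1 * y (k-m-1+m)" by (rule sh) (use m1 in auto)
      have e1: "1+(m-1) = m" "k-m+(m-1) = k-1" "k-m-1+m = k-1" using m1 by auto
      have s1': "y m * y (k-m) \<le> y 1 * y (k-1)" using s1 e1 by simp
      have s2': "y (m+1) * y (k-m-1) \<le> y 1 * y (k-1)" using s2 e1 by (simp add: add.commute)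
      have "(wk V E a x x * wk V E (2*k-a) x x)^2 = (wk V E a x x)^2 * (wk V E (2*k-a) x x)^2"
        by (simp add: power_mult_distrib)
      also have "\<dots> \<le> (y m * y (m+1)) * (y (k-m-1) * y (k-m))"
        by (rule mult_mono[OF ca cb]) (use ypos in \<open>auto intro: less_imp_le\<close>)
      also have "\<dots> = (y m * y (k-m)) * (y (m+1) * y (k-m-1))" by (simp add: ac_simps)
      also have "\<dots> \<le> (y 1 * y (k-1)) * (y 1 * y (k-1))"
        by (rule mult_mono[OF s1' s2']) (use ypos in \<open>auto intro: less_imp_le\<close>)
      also have "\<dots> = (y 1 * y (k-1))^2" by (simp add: power2_eq_square)
      finally have "(wk V E a x x * wk V E (2*k-a) x x)^2 \<le> (y 1 * y (k-1))^2" .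
      then have "wk V E a x x * wk V E (2*k-a) x x \<le> y 1 * y (k-1)"
        using nn by (rule power2_le_imp_le)
      then show ?thesis using rhs by simp
    qed
  qed
qed

end

context sg begin

lemma wk_add_sym: "wk V E (s+t) x y = (\<Sum>w\<in>V. wk V E s x w * wk V E t y w)"
  using wk_add[of s t x y] wk_sym[of t _ y] by simp

lemma T_cs: "(\<Sum>x\<in>V. wk V E (s+t) x x)^2 \<le> (\<Sum>x\<in>V. wk V E (2 * s) x x) * (\<Sum>x\<in>V. wk V E (2 * t) x x)"
proof -
  have h1: "(\<Sum>x\<in>V. wk V E (s+t) x x) = (\<Sum>p\<in>V\<times>V. wk V E s (fst p) (snd p) * wk V E t (fst p) (snd p))"
    by (simp add: wk_add_sym sum.cartesian_product case_prod_beta)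
  have h2: "(\<Sum>x\<in>V. wk V E (2 * r) x x) = (\<Sum>p\<in>V\<times>V. (wk V E r (fst p) (snd p))^2)" for r
    by (simp add: wk_sq sum.cartesian_product case_prod_beta)
  show ?thesis unfolding h1 h2 by (rule Cauchy_Schwarz_ineq_sum)
qed

definition R :: "nat \<Rightarrow> 'a \<Rightarrow> real" where "R s w = (\<Sum>u\<in>V. wk V E s w u)"

lemma U_id: "(\<Sum>u\<in>V. \<Sum>v\<in>V. wk V E (s+t) u v) = (\<Sum>w\<in>V. R s w * R t w)"
proof -
  have "(\<Sum>u\<in>V. \<Sum>v\<in>V. wk V E (s+t) u v) = (\<Sum>u\<in>V. \<Sum>v\<in>V. \<Sum>w\<in>V. wk V E s w u * wk V E t w v)"
    by (simp add: wk_add wk_sym[of s _ ])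
  also have "\<dots> = (\<Sum>w\<in>V. \<Sum>u\<in>V. \<Sum>v\<in>V. wk V E s w u * wk V E t w v)"
  proof -
    have "(\<Sum>u\<in>V. \<Sum>v\<in>V. \<Sum>w\<in>V. wk V E s w u * wk V E t w v) = (\<Sum>u\<in>V. \<Sum>w\<in>V. \<Sum>v\<in>V. wk V E s w u * wk V E t w v)"
      by (rule sum.cong[OF refl], rule sum.swap)
    also have "\<dots> = (\<Sum>w\<in>V. \<Sum>u\<in>V. \<Sum>v\<in>V. wk V E s w u * wk V E t w v)"
      by (rule sum.swap)
    finally show ?thesis .
  qed
  also have "\<dots> = (\<Sum>w\<in>V. R s w * R t w)"
    by (simp add: R_def sum_product)
  finally show ?thesis .
qed

lemma U_cs: "(\<Sum>u\<in>V. \<Sum>v\<in>V. wk V E (s+t) u v)^2 \<le> (\<Sum>u\<in>V. \<Sum>v\<in>V. wk V E (2 * s) u v) * (\<Sum>u\<in>V. \<Sum>v\<in>V. wk V E (2 * t) u v)"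
proof -
  have "(\<Sum>u\<in>V. \<Sum>v\<in>V. wk V E (2 * r) u v) = (\<Sum>w\<in>V. (R r w)^2)" for r
    using U_id[of r r] by (simp add: mult_2 power2_eq_square)
  then show ?thesis unfolding U_id by (simp add: Cauchy_Schwarz_ineq_sum)
qed

lemma R1: "R 1 w = real (degree V E w)"
  unfolding R_def degree_def using finV by (simp add: wk1 wk1_Suc sum.If_cases Int_def)

lemma U1: "(\<Sum>u\<in>V. \<Sum>v\<in>V. wk V E 2 u v) = (\<Sum>w\<in>V. (real (degree V E w))^2)"
  using U_id[of 1 1] by (simp only: R1 power2_eq_square one_add_one)

lemma T0: "(\<Sum>x\<in>V. wk V E (2 * 0) x x) = real (card V)"
  by (simp add: wk0)

lemma U0: "(\<Sum>u\<in>V. \<Sum>v\<in>V. wk V E (2 * 0) u v) = real (card V)"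
proof -
  have "(\<Sum>u\<in>V. \<Sum>v\<in>V. wk V E 0 u v) = (\<Sum>u\<in>V. 1)"
  proof (rule sum.cong[OF refl])
    fix u assume u: "u \<in> V"
    have "(\<Sum>v\<in>V. wk V E 0 u v) = (\<Sum>v\<in>V. if v = u then 1 else 0)"
      by (rule sum.cong) (auto simp: wk0 u)
    also have "\<dots> = 1" using finV u by simp
    finally show "(\<Sum>v\<in>V. wk V E 0 u v) = 1" .
  qed
  then show ?thesis by simp
qed

lemma U_le_T: "(\<Sum>u\<in>V. \<Sum>v\<in>V. wk V E (2 * k) u v) \<le> real (card V) * (\<Sum>x\<in>V. wk V E (2 * k) x x)"
proof -
  have pt: "wk V E (2 * k) u v \<le> (wk V E (2 * k) u u + wk V E (2 * k) v v) / 2" for u v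
  proof -
    have "wk V E (2 * k) u v = (\<Sum>w\<in>V. wk V E k u w * wk V E k v w)"
      using wk_add_sym[of k k u v] by (simp add: mult_2)
    also have "\<dots> \<le> (\<Sum>w\<in>V. ((wk V E k u w)^2 + (wk V E k v w)^2) / 2)"
    proof (rule sum_mono)
      fix w
      have "0 \<le> (wk V E k u w - wk V E k v w)^2" by simp
      then show "wk V E k u w * wk V E k v w \<le> ((wk V E k u w)^2 + (wk V E k v w)^2) / 2"
        by (simp add: power2_diff)
    qed
    also have "\<dots> = (wk V E (2 * k) u u + wk V E (2 * k) v v) / 2"
      by (simp add: wk_sq sum.distrib sum_divide_distrib[symmetric])
    finally show ?thesis .
  qed
  have "(\<Sum>u\<in>V. \<Sum>v\<in>V. wk V E (2 * k) u v) \<le> (\<Sum>u\<in>V. \<Sum>v\<in>V. (wk V E (2 * k) u u + wk V E (2 * k) v v) / 2)"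
    by (intro sum_mono pt)
  also have "\<dots> = real (card V) * (\<Sum>x\<in>V. wk V E (2 * k) x x)"
    by (simp add: sum.distrib sum_divide_distrib[symmetric] sum_distrib_left[symmetric])
  finally show ?thesis .
qed

end

context sg begin

lemma finite_hom: "finite (hom_cycles m V E)"
  by (rule finite_subset[of _ "{0..<m} \<rightarrow>\<^sub>E V"]) (auto simp: hom_cycles_def finV intro: finite_PiE)

lemma hom_ge:
  assumes m: "1 \<le> m"
  shows "(\<Sum>x\<in>V. wk V E m x x) \<le> real (hom_count m V E)"
proof -
  define CW where "CW = {g\<in>Wall V E m. g 0 = g m}"
  have fin: "finite CW" unfolding CW_def using finite_Wall[OF finV] by auto
  have "real (card CW) = (\<Sum>x\<in>V. real (card {g\<in>CW. g 0 = x}))"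
    by (rule card_group[OF fin finV]) (auto simp: CW_def intro: Wall_in)
  also have "\<dots> = (\<Sum>x\<in>V. wk V E m x x)"
  proof (rule sum.cong[OF refl])
    fix x
    have "{g\<in>CW. g 0 = x} = walks V E m x x" unfolding CW_def walks_def by auto
    then show "real (card {g\<in>CW. g 0 = x}) = wk V E m x x" by (simp add: wk_def)
  qed
  finally have e: "real (card CW) = (\<Sum>x\<in>V. wk V E m x x)" .
  have inj: "inj_on (\<lambda>g. restrict g {0..<m}) CW"
  proof (rule inj_onI)
    fix g1 g2 assume g1: "g1 \<in> CW" and g2: "g2 \<in> CW" and eq: "restrict g1 {0..<m} = restrict g2 {0..<m}"
    have w1: "g1 \<in> Wall V E m" "g1 0 = g1 m" and w2: "g2 \<in> Wall V E m" "g2 0 = g2 m"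
      using g1 g2 by (auto simp: CW_def)
    have lt: "g1 t = g2 t" if "t < m" for t using fun_cong[OF eq, of t] that by simp
    show "g1 = g2"
    proof
      fix t show "g1 t = g2 t"
      proof (cases "t < m")
        case True then show ?thesis by (rule lt)
      next
        case False
        show ?thesis
        proof (cases "t = m")
          case True then show ?thesis using w1 w2 lt[of 0] m by auto
        next
          case False
          then show ?thesis using \<open>\<not> t < m\<close> Wall_out[OF w1(1), of t] Wall_out[OF w2(1), of t] by auto
        qed
      qed
    qed
  qed
  have img: "(\<lambda>g. restrict g {0..<m}) ` CW \<subseteq> hom_cycles m V E"
  proof (rule image_subsetI)
    fix g assume "g \<in> CW"
    then have w: "g \<in> Wall V E m" "g 0 = g m" by (auto simp: CW_def)
    have "\<forall>i<m. E (restrict g {0..<m} i) (restrict g {0..<m} ((i + 1) mod m))"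
    proof (intro allI impI)
      fix i assume i: "i < m"
      show "E (restrict g {0..<m} i) (restrict g {0..<m} ((i + 1) mod m))"
      proof (cases "i + 1 < m")
        case True then show ?thesis using Wall_edge[OF w(1) i] i by auto
      next
        case False
        then have "i + 1 = m" using i by auto
        then show ?thesis using Wall_edge[OF w(1) i] i w(2) m by auto
      qed
    qed
    moreover have "restrict g {0..<m} \<in> {0..<m} \<rightarrow>\<^sub>E V" using Wall_in[OF w(1)] by auto
    ultimately show "restrict g {0..<m} \<in> hom_cycles m V E" by (simp add: hom_cycles_def)
  qed
  have "card CW \<le> card (hom_cycles m V E)"
    by (rule card_inj_on_le[OF inj img finite_hom])
  then show ?thesis using e by (simp add: hom_count_def)
qed

definition ext :: "nat \<Rightarrow> (nat \<Rightarrow> 'a) \<Rightarrow> nat \<Rightarrow> 'a" where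
  "ext m f = (\<lambda>t. if t \<le> m then f (t mod m) else undefined)"

lemma ext_Wall:
  assumes m: "1 \<le> m" and f: "f \<in> hom_cycles m V E"
  shows "ext m f \<in> Wall V E m" "ext m f 0 = ext m f m" "\<And>i. i < m \<Longrightarrow> ext m f i = f i"
proof -
  have f1: "f \<in> {0..<m} \<rightarrow>\<^sub>E V" and f2: "\<forall>i<m. E (f i) (f ((i + 1) mod m))"
    using f by (auto simp: hom_cycles_def)
  show "ext m f \<in> Wall V E m"
  proof (rule WallI)
    fix t assume "t \<le> m" then show "ext m f t \<in> V" using f1 m by (auto simp: ext_def)
  next
    fix t assume "\<not> t \<le> m" then show "ext m f t = undefined" by (simp add: ext_def)
  next
    fix i assume i: "i < m"
    have "E (f i) (f ((i + 1) mod m))" using f2 i by auto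
    then show "E (ext m f i) (ext m f (Suc i))" using i by (simp add: ext_def)
  qed
  show "ext m f 0 = ext m f m" by (simp add: ext_def)
  show "\<And>i. i < m \<Longrightarrow> ext m f i = f i" by (simp add: ext_def)
qed

lemma card_pair_le:
  assumes m: "1 \<le> m" and ij: "i < j" "j < m"
  shows "card {f\<in>hom_cycles m V E. f i = f j} \<le> card {g\<in>Wall V E m. g 0 = g m \<and> g i = g j}"
proof (rule card_inj_on_le[where f="ext m"])
  show "inj_on (ext m) {f\<in>hom_cycles m V E. f i = f j}"
  proof (rule inj_onI)
    fix f1 f2 assume a1: "f1 \<in> {f\<in>hom_cycles m V E. f i = f j}" and a2: "f2 \<in> {f\<in>hom_cycles m V E. f i = f j}"
      and eq: "ext m f1 = ext m f2"
    have p1: "f1 \<in> {0..<m} \<rightarrow>\<^sub>E V" and p2: "f2 \<in> {0..<m} \<rightarrow>\<^sub>E V" using a1 a2 by (auto simp: hom_cycles_def)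
    show "f1 = f2"
    proof
      fix t show "f1 t = f2 t"
      proof (cases "t < m")
        case True then show ?thesis using fun_cong[OF eq, of t] ext_Wall(3)[OF m, of f1 t] ext_Wall(3)[OF m, of f2 t] a1 a2 by auto
      next
        case False then show ?thesis using p1 p2 by (simp add: PiE_def extensional_def)
      qed
    qed
  qed
  show "ext m ` {f\<in>hom_cycles m V E. f i = f j} \<subseteq> {g\<in>Wall V E m. g 0 = g m \<and> g i = g j}"
  proof (rule image_subsetI)
    fix f assume f: "f \<in> {f\<in>hom_cycles m V E. f i = f j}"
    then have fh: "f \<in> hom_cycles m V E" "f i = f j" by auto
    show "ext m f \<in> {g\<in>Wall V E m. g 0 = g m \<and> g i = g j}"
      using ext_Wall[OF m fh(1)] fh(2) ij by auto
  qed
  show "finite {g\<in>Wall V E m. g 0 = g m \<and> g i = g j}" using finite_Wall[OF finV] by auto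
qed

lemma card_pair_eq:
  assumes ij: "i \<le> j" "j \<le> m"
  shows "real (card {g\<in>Wall V E m. g 0 = g m \<and> g i = g j}) = (\<Sum>x\<in>V. wk V E (j-i) x x * wk V E (m-j+i) x x)"
proof -
  define C where "C = {g\<in>Wall V E m. g 0 = g m \<and> g i = g j}"
  have finC: "finite C" unfolding C_def using finite_Wall[OF finV] by auto
  have "real (card C) = (\<Sum>v\<in>V. real (card {g\<in>C. g 0 = v}))"
    by (rule card_group[OF finC finV]) (auto simp: C_def intro: Wall_in)
  also have "\<dots> = (\<Sum>v\<in>V. \<Sum>x\<in>V. wk V E i v x * wk V E (j-i) x x * wk V E (m-j) x v)"
  proof (rule sum.cong[OF refl])
    fix v
    have finCv: "finite {g\<in>C. g 0 = v}" using finC by auto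
    have "real (card {g\<in>C. g 0 = v}) = (\<Sum>x\<in>V. real (card {g\<in>{g\<in>C. g 0 = v}. g i = x}))"
      by (rule card_group[OF finCv finV]) (use ij in \<open>auto simp: C_def intro: Wall_in\<close>)
    also have "\<dots> = (\<Sum>x\<in>V. wk V E i v x * wk V E (j-i) x x * wk V E (m-j) x v)"
    proof (rule sum.cong[OF refl])
      fix x
      have "{g\<in>{g\<in>C. g 0 = v}. g i = x} = {g \<in> Wall V E m. g 0 = v \<and> g i = x \<and> g j = x \<and> g m = v}"
        unfolding C_def by auto
      then show "real (card {g\<in>{g\<in>C. g 0 = v}. g i = x}) = wk V E i v x * wk V E (j-i) x x * wk V E (m-j) x v"
        using split2[OF ij, of V E v x x v] unfolding wk_def by simp
    qed
    finally show "real (card {g\<in>C. g 0 = v}) = (\<Sum>x\<in>V. wk V E i v x * wk V E (j-i) x x * wk V E (m-j) x v)" .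
  qed
  also have "\<dots> = (\<Sum>x\<in>V. \<Sum>v\<in>V. wk V E (j-i) x x * (wk V E (m-j) x v * wk V E i v x))"
    by (subst sum.swap) (simp add: ac_simps)
  also have "\<dots> = (\<Sum>x\<in>V. wk V E (j-i) x x * wk V E (m-j+i) x x)"
    by (simp add: wk_add sum_distrib_left)
  finally show ?thesis unfolding C_def .
qed

end

lemma k_sq_bound: "(k::nat)^2 \<le> 2^(k+13)"
proof (induction k)
  case 0 then show ?case by simp
next
  case (Suc k)
  show ?case
  proof (cases "k \<le> 3")
    case True
    then have "k = 0 \<or> k = 1 \<or> k = 2 \<or> k = 3" by auto
    then show ?thesis by (auto simp: power2_eq_square)
  next
    case False
    have "(Suc k)^2 = k^2 + 2*k + 1" by (simp add: power2_eq_square)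
    also have "\<dots> \<le> 2 * k^2"
    proof -
      have "4 * k \<le> k * k" using False by (intro mult_right_mono) auto
      then have "Suc (2*k) \<le> k*k" using False by linarith
      then show ?thesis by (simp add: power2_eq_square)
    qed
    also have "\<dots> \<le> 2 * 2^(k+13)" using Suc by simp
    also have "\<dots> = 2^(Suc k + 13)" by (simp add: power_add)
    finally show ?thesis .
  qed
qed

context sg begin

lemma deg_le_max: "v \<in> V \<Longrightarrow> degree V E v \<le> max_degree V E"
  unfolding max_degree_def using finV by (auto intro: Max_ge)
lemma deg_ge_min: "v \<in> V \<Longrightarrow> min_degree V E \<le> degree V E v"
  unfolding min_degree_def using finV by (auto intro: Min_le)

lemma T_bound:
  assumes k: "1 \<le> k" and nb: "\<And>x. x \<in> V \<Longrightarrow> \<exists>w. E x w" and Vne: "V \<noteq> {}"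
    and dpos: "average_degree V E > 0"
  shows "(\<Sum>x\<in>V. wk V E (2 * k) x x) \<ge> (average_degree V E)^(2*k)"
proof -
  define n where "n = real (card V)"
  have npos: "n > 0" using Vne finV by (simp add: n_def card_gt_0_iff)
  define d where "d = average_degree V E"
  define U where "U j = (\<Sum>u\<in>V. \<Sum>v\<in>V. wk V E (2 * j) u v)" for j
  define T where "T j = (\<Sum>x\<in>V. wk V E (2 * j) x x)" for j
  have Tpos: "T j > 0" for j
  proof -
    have "\<forall>x\<in>V. wk V E (2 * j) x x > 0" using nb wk_even_pos by blast
    then show ?thesis unfolding T_def using Vne finV by (simp add: sum_pos)
  qed
  have UT: "T j \<le> U j" for j
    unfolding T_def U_def
    by (rule sum_mono) (rule member_le_sum, auto simp: wk_nonneg finV)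
  have Upos: "U j > 0" for j using UT[of j] Tpos[of j] by simp
  have Ulc: "(U (Suc j))^2 \<le> U j * U (Suc (Suc j))" for j
    using U_cs[of j "Suc (Suc j)"] unfolding U_def by (simp add: mult_2)
  have U0': "U 0 = n" using U0 by (simp add: U_def n_def)
  have U1: "U 1 \<ge> n * d^2"
  proof -
    have "(\<Sum>w\<in>V. real (degree V E w) * 1)^2 \<le> (\<Sum>w\<in>V. (real (degree V E w))^2) * (\<Sum>w\<in>V. 1^2)"
      by (rule Cauchy_Schwarz_ineq_sum)
    then have "(\<Sum>w\<in>V. real (degree V E w))^2 \<le> U 1 * n"
      using U1 by (simp add: U_def n_def)
    moreover have "(\<Sum>w\<in>V. real (degree V E w)) = n * d"
      using npos by (simp add: d_def n_def average_degree_def)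
    ultimately have "(n*d)^2 \<le> U 1 * n" by simp
    then have "n * (n * d^2) \<le> n * U 1" by (simp add: power2_eq_square ac_simps)
    then show ?thesis using npos by simp
  qed
  have Uk: "U j \<ge> n * (U 1 / n)^j" for j
  proof (induction j)
    case 0 then show ?case using U0' by simp
  next
    case (Suc j)
    have "U (0+1) * U j \<le> U 0 * U (j+1)" by (rule lc_shift[of U, OF Upos Ulc]) simp
    then have "U 1 * U j \<le> n * U (Suc j)" using U0' by simp
    moreover have "U 1 * (n * (U 1 / n)^j) \<le> U 1 * U j"
      using Suc Upos[of 1] by (simp add: mult_left_mono)
    ultimately have "U 1 * (n * (U 1 / n)^j) \<le> n * U (Suc j)" by linarith
    then show ?case using npos by (simp add: field_simps)
  qed
  have "U k \<ge> n * d^(2*k)"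
  proof -
    have "d^2 \<le> U 1 / n" using U1 npos by (simp add: field_simps)
    then have "(d^2)^k \<le> (U 1 / n)^k" by (rule power_mono) simp
    then have "n * (d^2)^k \<le> n * (U 1 / n)^k" using npos by simp
    then show ?thesis using Uk[of k] by (simp add: power_mult)
  qed
  moreover have "U k \<le> n * T k" using U_le_T[of k] unfolding U_def T_def n_def .
  ultimately have "n * d^(2*k) \<le> n * T k" by linarith
  then show "T k \<ge> d^(2*k)" unfolding T_def d_def using npos by simp
qed

end

context sg begin

lemma ratio_bound:
  assumes k: "1 \<le> k" and nb: "\<And>x. x \<in> V \<Longrightarrow> \<exists>w. E x w" and Vne: "V \<noteq> {}"
    and dpos: "average_degree V E > 0" and Cpos: "C > 0"
    and dC: "average_degree V E ^ k = C ^ k * real (card V)"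
    and DK: "real (max_degree V E) \<le> K * average_degree V E"
  shows "real (max_degree V E) * (\<Sum>x\<in>V. wk V E (2 * (k-1)) x x) \<le> K / C * (\<Sum>x\<in>V. wk V E (2 * k) x x)"
proof -
  define n where "n = real (card V)"
  have npos: "n > 0" using Vne finV by (simp add: n_def card_gt_0_iff)
  define d where "d = average_degree V E"
  define T where "T j = (\<Sum>x\<in>V. wk V E (2 * j) x x)" for j
  have Tpos: "T j > 0" for j
  proof -
    have "\<forall>x\<in>V. wk V E (2 * j) x x > 0" using nb wk_even_pos by blast
    then show ?thesis unfolding T_def using Vne finV by (simp add: sum_pos)
  qed
  have Tlc: "(T (Suc j))^2 \<le> T j * T (Suc (Suc j))" for j
    using T_cs[of j "Suc (Suc j)"] unfolding T_def by (simp add: mult_2)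
  have T0': "T 0 = n" using T0 by (simp add: T_def n_def)
  define \<rho> where "\<rho> = T k / T (k-1)"
  have rpos: "\<rho> > 0" using Tpos by (simp add: \<rho>_def)
  have step: "T (Suc j) \<le> \<rho> * T j" if "j \<le> k - 1" for j
  proof -
    have "T (j+1) * T (k-1) \<le> T j * T ((k-1)+1)" by (rule lc_shift[of T, OF Tpos Tlc that])
    then have "T (Suc j) * T (k-1) \<le> T j * T k" using k by simp
    then show ?thesis using Tpos[of "k-1"] by (simp add: \<rho>_def field_simps)
  qed
  have Tj: "T j \<le> \<rho>^j * n" if "j \<le> k" for j
    using that
  proof (induction j)
    case 0 then show ?case using T0' by simp
  next
    case (Suc j)
    have "T (Suc j) \<le> \<rho> * T j" using step Suc.prems by simp
    also have "\<dots> \<le> \<rho> * (\<rho>^j * n)" using Suc rpos by (simp add: mult_left_mono)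
    finally show ?case by simp
  qed
  have Tk: "T k \<ge> d^(2*k)" unfolding T_def d_def by (rule T_bound[OF k nb Vne dpos])
  have "(C * d)^k * n = d^k * d^k"
    using dC by (simp add: d_def n_def power_mult_distrib)
  also have "\<dots> = d^(2*k)" by (simp add: mult_2 power_add)
  also have "\<dots> \<le> \<rho>^k * n" using Tk Tj[of k] by simp
  finally have "(C*d)^k \<le> \<rho>^k" using npos by simp
  moreover have "k = Suc (k-1)" using k by simp
  ultimately have "(C*d)^(Suc (k-1)) \<le> \<rho>^(Suc (k-1))" by metis
  then have Cd: "C * d \<le> \<rho>" by (rule power_le_imp_le_base) (use rpos in simp)
  have "real (max_degree V E) * T (k-1) = real (max_degree V E) * T k / \<rho>"
    using Tpos[of k] Tpos[of "k-1"] by (simp add: \<rho>_def)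
  also have "\<dots> \<le> K * d * T k / (C * d)"
  proof (rule frac_le)
    show "0 \<le> K * d * T k" using DK dpos Tpos[of k] unfolding d_def
      by (metis less_imp_le mult_nonneg_nonneg of_nat_0_le_iff order_trans)
    show "real (max_degree V E) * T k \<le> K * d * T k" using DK Tpos[of k] unfolding d_def
      by (simp add: mult_right_mono)
    show "0 < C * d" using Cpos dpos by (simp add: d_def)
    show "C * d \<le> \<rho>" by (rule Cd)
  qed
  also have "\<dots> = K / C * T k" using dpos by (simp add: d_def)
  finally show ?thesis unfolding T_def .
qed

end

context sg begin

lemma degen_bound:
  assumes k: "1 \<le> k" and nb: "\<And>x. x \<in> V \<Longrightarrow> \<exists>w. E x w"
  shows "real (card (degenerate_hom_cycles (2*k) V E)) \<le> 4 * real k^2 * (real (max_degree V E) * (\<Sum>x\<in>V. wk V E (2 * (k-1)) x x))"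
proof -
  define m where "m = 2 * k"
  have m1: "1 \<le> m" using k by (simp add: m_def)
  define P where "P = {p \<in> {0..<m} \<times> {0..<m}. fst p < snd p}"
  have finP: "finite P" unfolding P_def by auto
  define B where "B = real (max_degree V E) * (\<Sum>x\<in>V. wk V E (2 * (k-1)) x x)"
  have B0: "0 \<le> B" unfolding B_def by (intro mult_nonneg_nonneg sum_nonneg wk_nonneg) simp
  have sub: "degenerate_hom_cycles m V E \<subseteq> (\<Union>p\<in>P. {f\<in>hom_cycles m V E. f (fst p) = f (snd p)})"
  proof
    fix f assume f: "f \<in> degenerate_hom_cycles m V E"
    then have fh: "f \<in> hom_cycles m V E" and ni: "\<not> inj_on f {0..<m}"
      by (auto simp: degenerate_hom_cycles_def)
    from ni obtain a b where ab: "a \<in> {0..<m}" "b \<in> {0..<m}" "f a = f b" "a \<noteq> b"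
      unfolding inj_on_def by blast
    show "f \<in> (\<Union>p\<in>P. {f\<in>hom_cycles m V E. f (fst p) = f (snd p)})"
    proof (cases "a < b")
      case True
      then have "(a,b) \<in> P" using ab by (auto simp: P_def)
      then show ?thesis using fh ab by force
    next
      case False
      then have "(b,a) \<in> P" using ab by (auto simp: P_def)
      then show ?thesis using fh ab by force
    qed
  qed
  have each: "real (card {f\<in>hom_cycles m V E. f (fst p) = f (snd p)}) \<le> B" if p: "p \<in> P" for p
  proof -
    obtain i j where pij: "p = (i,j)" by fastforce
    have ij: "i < j" "j < m" using p pij by (auto simp: P_def)
    have "real (card {f\<in>hom_cycles m V E. f i = f j}) \<le> real (card {g\<in>Wall V E m. g 0 = g m \<and> g i = g j})"
      using card_pair_le[OF m1 ij] by simp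
    also have "\<dots> = (\<Sum>x\<in>V. wk V E (j-i) x x * wk V E (m-j+i) x x)"
      by (rule card_pair_eq) (use ij in auto)
    also have "\<dots> \<le> (\<Sum>x\<in>V. real (max_degree V E) * wk V E (2 * (k-1)) x x)"
    proof (rule sum_mono)
      fix x assume x: "x \<in> V"
      obtain w where xw: "E x w" using nb[OF x] by blast
      have e: "m - j + i = 2*k - (j-i)" using ij by (simp add: m_def)
      have "wk V E (j-i) x x * wk V E (m-j+i) x x \<le> wk V E 2 x x * wk V E (2*k-2) x x"
        unfolding e by (rule pv[OF x xw]) (use ij in \<open>auto simp: m_def\<close>)
      also have "\<dots> \<le> real (max_degree V E) * wk V E (2 * (k-1)) x x"
      proof -
        have "2*k-2 = 2*(k-1)" by simp
        moreover have "wk V E 2 x x \<le> real (max_degree V E)"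
          using wk2_deg[of x] deg_le_max[OF x] by simp
        ultimately show ?thesis by (simp add: mult_right_mono wk_nonneg)
      qed
      finally show "wk V E (j-i) x x * wk V E (m-j+i) x x \<le> real (max_degree V E) * wk V E (2 * (k-1)) x x" .
    qed
    also have "\<dots> = B" by (simp add: B_def sum_distrib_left)
    finally show ?thesis using pij by simp
  qed
  have "card (degenerate_hom_cycles m V E) \<le> card (\<Union>p\<in>P. {f\<in>hom_cycles m V E. f (fst p) = f (snd p)})"
    by (rule card_mono[OF _ sub]) (use finP finite_hom in auto)
  also have "\<dots> \<le> (\<Sum>p\<in>P. card {f\<in>hom_cycles m V E. f (fst p) = f (snd p)})"
    by (rule card_UN_le[OF finP])
  finally have "real (card (degenerate_hom_cycles m V E)) \<le> (\<Sum>p\<in>P. real (card {f\<in>hom_cycles m V E. f (fst p) = f (snd p)}))"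
  proof -
    assume h: "card (degenerate_hom_cycles m V E) \<le> (\<Sum>p\<in>P. card {f\<in>hom_cycles m V E. f (fst p) = f (snd p)})"
    have "real (card (degenerate_hom_cycles m V E)) \<le> real (\<Sum>p\<in>P. card {f\<in>hom_cycles m V E. f (fst p) = f (snd p)})"
      using h by (simp only: of_nat_le_iff)
    then show ?thesis by (simp only: of_nat_sum)
  qed
  also have "\<dots> \<le> (\<Sum>p\<in>P. B)" by (rule sum_mono) (rule each)
  also have "\<dots> = real (card P) * B" by simp
  also have "\<dots> \<le> 4 * real k^2 * B"
  proof (rule mult_right_mono[OF _ B0])
    have "card P \<le> card ({0..<m} \<times> {0..<m})" by (rule card_mono) (auto simp: P_def)
    also have "\<dots> = 4 * k^2" by (simp add: m_def card_cartesian_product power2_eq_square)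
    finally show "real (card P) \<le> 4 * real k^2" by (metis of_nat_le_iff of_nat_mult of_nat_numeral of_nat_power)
  qed
  finally show ?thesis unfolding m_def B_def .
qed

end

theorem lemma4p3:
  fixes V :: "'a set" and E :: "'a \<Rightarrow> 'a \<Rightarrow> bool" and k :: nat and C K :: real
  assumes "simple_graph V E"
    and "V \<noteq> {}"
    and "k \<ge> 1"
    and "K = 2 ^ (3 * k + 5)"
    and "almost_regular K V E"
    and "C > 0"
    and "average_degree V E = C * real (card V) powr (1 / real k)"
  shows "real (card (degenerate_hom_cycles (2 * k) V E))
           \<le> 2 ^ (2 * k + 10) / sqrt C * real (hom_count (2 * k) V E)"
proof -
  interpret sg V E by (rule sg.intro[OF assms(1)])
  note Vne = assms(2) and k = assms(3) and Kdef = assms(4) and ar = assms(5) and Cpos = assms(6) and avg = assms(7)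
  define n where "n = real (card V)"
  have npos: "n > 0" using Vne finV by (simp add: n_def card_gt_0_iff)
  define d where "d = average_degree V E"
  have dpos: "d > 0" using avg Cpos npos by (simp add: d_def n_def)
  have Kpos: "K > 0" using Kdef by simp
  have sumdeg: "(\<Sum>v\<in>V. real (degree V E v)) = n * d"
    using npos by (simp add: d_def n_def average_degree_def)
  have Dpos: "real (max_degree V E) > 0"
  proof (rule ccontr)
    assume "\<not> real (max_degree V E) > 0"
    then have "\<forall>v\<in>V. degree V E v = 0" using deg_le_max by fastforce
    then have "(\<Sum>v\<in>V. real (degree V E v)) = 0" by simp
    then show False using sumdeg npos dpos by simp
  qed
  have Dle: "real (max_degree V E) \<le> K * real (min_degree V E)" using ar by (simp add: almost_regular_def)
  have dmin: "real (min_degree V E) > 0"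
  proof (rule ccontr)
    assume "\<not> real (min_degree V E) > 0"
    then have "real (min_degree V E) = 0" by simp
    then show False using Dle Dpos by simp
  qed
  have nb: "\<exists>w. E x w" if x: "x \<in> V" for x
  proof -
    have "degree V E x > 0" using deg_ge_min[OF x] dmin by simp
    then have "{u\<in>V. E x u} \<noteq> {}" unfolding degree_def by (metis card.empty less_irrefl)
    then show ?thesis by blast
  qed
  have mind: "real (min_degree V E) \<le> d"
  proof -
    have "(\<Sum>v\<in>V. real (min_degree V E)) \<le> (\<Sum>v\<in>V. real (degree V E v))"
      by (rule sum_mono) (simp add: deg_ge_min)
    then have "n * real (min_degree V E) \<le> n * d" using sumdeg by (simp add: n_def)
    then show ?thesis using npos by simp
  qed
  have DK: "real (max_degree V E) \<le> K * d"
    using Dle mind Kpos by (meson mult_left_mono less_imp_le order_trans)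
  have dC: "d ^ k = C ^ k * n"
  proof -
    have "(n powr (1 / real k)) ^ k = (n powr (1 / real k)) powr (real k)"
      using npos by (simp add: powr_realpow)
    also have "\<dots> = n" using npos k by (simp add: powr_powr)
    finally have "(n powr (1 / real k)) ^ k = n" .
    then show ?thesis using avg by (simp add: d_def n_def power_mult_distrib)
  qed
  define Tk where "Tk = (\<Sum>x\<in>V. wk V E (2 * k) x x)"
  have Tk_hom: "Tk \<le> real (hom_count (2 * k) V E)"
    unfolding Tk_def by (rule hom_ge) (use k in simp)
  have rb: "real (max_degree V E) * (\<Sum>x\<in>V. wk V E (2 * (k-1)) x x) \<le> K / C * Tk"
    unfolding Tk_def
    by (rule ratio_bound[OF k nb Vne _ Cpos _ DK[unfolded d_def]]) (use dpos dC in \<open>auto simp: d_def n_def\<close>)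
  have deg: "real (card (degenerate_hom_cycles (2*k) V E)) \<le> 4 * real k^2 * (K / C * real (hom_count (2 * k) V E))"
  proof -
    have "real (card (degenerate_hom_cycles (2*k) V E)) \<le> 4 * real k^2 * (real (max_degree V E) * (\<Sum>x\<in>V. wk V E (2 * (k-1)) x x))"
      by (rule degen_bound[OF k nb])
    also have "\<dots> \<le> 4 * real k^2 * (K / C * Tk)"
      by (rule mult_left_mono[OF rb]) simp
    also have "\<dots> \<le> 4 * real k^2 * (K / C * real (hom_count (2 * k) V E))"
      using Tk_hom Kpos Cpos by (intro mult_left_mono) auto
    finally show ?thesis .
  qed
  have hom_deg: "real (card (degenerate_hom_cycles (2*k) V E)) \<le> real (hom_count (2 * k) V E)"
  proof -
    have "card (degenerate_hom_cycles (2*k) V E) \<le> card (hom_cycles (2*k) V E)"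
      by (rule card_mono[OF finite_hom]) (auto simp: degenerate_hom_cycles_def)
    then show ?thesis by (simp add: hom_count_def)
  qed
  have sCpos: "sqrt C > 0" using Cpos by simp
  have h0: "0 \<le> real (hom_count (2 * k) V E)" by simp
  show ?thesis
  proof (cases "sqrt C \<le> 2 ^ (2 * k + 10)")
    case True
    then have "1 \<le> 2 ^ (2 * k + 10) / sqrt C" using sCpos by simp
    then have "real (hom_count (2 * k) V E) \<le> 2 ^ (2 * k + 10) / sqrt C * real (hom_count (2 * k) V E)"
      using h0 by (metis mult_1 mult_right_mono)
    then show ?thesis using hom_deg by linarith
  next
    case False
    then have big: "2 ^ (2 * k + 10) < sqrt C" by simp
    have ksq: "real k^2 \<le> 2^(k+13)"
    proof -
      have "k^2 \<le> 2^(k+13)" by (rule k_sq_bound)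
      then show ?thesis by (metis of_nat_le_iff of_nat_numeral of_nat_power)
    qed
    have "4 * real k^2 * K \<le> 4 * 2^(k+13) * 2^(3*k+5)"
      using ksq Kdef by simp
    also have "\<dots> = (2::real)^(2*k+10) * 2^(2*k+10)"
    proof -
      have "(2::real)^(2*k+10) * 2^(2*k+10) = 2^((2*k+10) + (2*k+10))" by (rule power_add[symmetric])
      also have "(2*k+10) + (2*k+10) = 2 + (k+13) + (3*k+5)" by simp
      also have "(2::real)^(2 + (k+13) + (3*k+5)) = 2^2 * 2^(k+13) * 2^(3*k+5)" by (simp only: power_add)
      finally show ?thesis by simp
    qed
    also have "\<dots> \<le> 2^(2*k+10) * sqrt C"
      using big by (intro mult_left_mono) auto
    finally have key: "4 * real k^2 * K \<le> 2^(2*k+10) * sqrt C" .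
    have "4 * real k^2 * (K / C) = (4 * real k^2 * K) / (sqrt C * sqrt C)"
      using Cpos by simp
    also have "\<dots> \<le> (2^(2*k+10) * sqrt C) / (sqrt C * sqrt C)"
      by (rule divide_right_mono[OF key]) simp
    also have "\<dots> = 2^(2*k+10) / sqrt C"
      by (rule nonzero_mult_divide_mult_cancel_right) (use sCpos in simp)
    finally have coef: "4 * real k^2 * (K / C) \<le> 2^(2*k+10) / sqrt C" .
    have "4 * real k^2 * (K / C * real (hom_count (2 * k) V E)) = (4 * real k^2 * (K / C)) * real (hom_count (2 * k) V E)"
      by simp
    also have "\<dots> \<le> 2^(2*k+10) / sqrt C * real (hom_count (2 * k) V E)"
      by (rule mult_right_mono[OF coef h0])
    finally show ?thesis using deg by linarith
  qed
qed

end
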